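(* Let $\beta>0$ and let $V\in\mathbb R^{d\times d}$ be real symmetric with orthonormal eigenbasis $(e_k)_{k=1}^d$ and eigenvalues $(\lambda_k)$ satisfying $\lambda_1>\max_{k\ge2}|\lambda_k|$. Let $x_i(t)\in\mathbb S^{d-1}$, $i\in[n]$, solve \[ \dot x_i=P^\perp_{x_i}\Big(\frac1{Z_i}\sum_{j=1}^n e^{\beta\langle x_i,Vx_j\rangle}Vx_j\Big),\qquad Z_i=\sum_{k=1}^n e^{\beta\langle x_i,Vx_k\rangle}, \] and write $c_{i,k}(t)=\langle x_i(t),e_k\rangle$. Suppose there is $\delta>0$ with $c_{i,1}(0)\ge\delta$ for all $i\in[n]$. Then: (1) The cone $\mathcal C_\delta:=\{(x_i)_{i=1}^n\in(\mathbb S^{d-1})^n: c_{i,1}\ge\delta\ \forall i\in[n]\}$ is forward invariant. (2) For every $k\neq1$, setting $r_{i,k}(t)=c_{i,k}(t)/c_{i,1}(t)$ and $R_k(t)=\max_{1\le i\le n}|r_{i,k}(t)|$, one has $R_k(t)\le R_k(0)e^{-\delta(\lambda_1-|\lambda_k|)t}$ for all $t\ge0$. (3) For every $i\in[n]$, $x_i(t)\to e_1$ as $t\to\infty$.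
   Context: $P^\perp_xy=y-\langle x,y\rangle x$ denotes the orthogonal projection onto $T_x\mathbb S^{d-1}$. *)

theory Defs
  imports "HOL-Analysis.Analysis"
begin

definition tproj :: "real^'d \<Rightarrow> real^'d \<Rightarrow> real^'d" where
  "tproj x y = y - (x \<bullet> y) *\<^sub>R x"

definition attnZ :: "real \<Rightarrow> real^'d^'d \<Rightarrow> nat \<Rightarrow> (nat \<Rightarrow> real^'d) \<Rightarrow> nat \<Rightarrow> real" where
  "attnZ \<beta> V n y i = (\<Sum>k<n. exp (\<beta> * (y i \<bullet> (V *v y k))))"

definition attn_field :: "real \<Rightarrow> real^'d^'d \<Rightarrow> nat \<Rightarrow> (nat \<Rightarrow> real^'d) \<Rightarrow> nat \<Rightarrow> real^'d" where
  "attn_field \<beta> V n y i =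
     tproj (y i) ((1 / attnZ \<beta> V n y i) *\<^sub>R
        (\<Sum>j<n. exp (\<beta> * (y i \<bullet> (V *v y j))) *\<^sub>R (V *v y j)))"

end

theory Submission imports Defs begin
lemma core_cmp:
  fixes I :: "'i set" and g g' :: "'i \<Rightarrow> real \<Rightarrow> real"
  assumes fin: "finite I"
  and deriv: "\<And>i t. i\<in>I \<Longrightarrow> t \<ge> 0 \<Longrightarrow> (g i has_real_derivative g' i t) (at t within {0..})"
  and eta: "\<eta> > 0"
  and init: "\<And>i. i\<in>I \<Longrightarrow> g i 0 \<le> K"
  and cond: "\<And>i t. i\<in>I \<Longrightarrow> t \<ge> 0 \<Longrightarrow> (\<forall>j\<in>I. g j t \<le> g i t) \<Longrightarrow> g i t < K + \<eta> \<Longrightarrow> g' i t \<le> 0"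
  and iI: "i \<in> I" and t0: "t0 \<ge> 0"
  shows "g i t0 \<le> K"
proof -
  have claim: "\<forall>t\<in>{0..T}. \<forall>i\<in>I. g i t \<le> K + \<epsilon> * t"
    if T: "T \<ge> 0" and ep: "\<epsilon> > 0" "\<epsilon> * T < \<eta>" for T \<epsilon>
  proof (rule ccontr)
    assume neg0: "\<not> ?thesis"
    define S where "S = {t\<in>{0..T}. \<exists>i\<in>I. g i t > K + \<epsilon> * t}"
    have Sne: "S \<noteq> {}" using neg0 unfolding S_def by force
    have Sbdd: "bdd_below S" unfolding S_def by (rule bdd_belowI[of _ 0]) auto
    define s where "s = Inf S"
    have s0: "s \<ge> 0" unfolding s_def using Sne by (rule cInf_greatest) (auto simp: S_def)
    have sT: "s \<le> T" proof -
      obtain u where "u \<in> S" using Sne by blast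
      then have "s \<le> u" unfolding s_def using Sbdd by (simp add: cInf_lower)
      with \<open>u\<in>S\<close> show ?thesis by (auto simp: S_def)
    qed
    have before: "g j t \<le> K + \<epsilon> * t" if "j \<in> I" "0 \<le> t" "t < s" for j t
    proof (rule ccontr)
      assume "\<not> ?thesis"
      then have "t \<in> S" using that sT unfolding S_def by (auto simp: not_le)
      then have "s \<le> t" unfolding s_def using Sbdd by (simp add: cInf_lower)
      with that show False by simp
    qed
    have cont: "continuous (at t within {0..}) (g j)" if "j \<in> I" "t \<ge> 0" for j t
      using deriv[OF that] by (rule DERIV_continuous)
    have at_s: "g j s \<le> K + \<epsilon> * s" if j: "j \<in> I" for j
    proof (rule ccontr)
      assume neg: "\<not> ?thesis"
      have "continuous (at s within {0..}) (\<lambda>t. g j t - \<epsilon> * t)"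
        by (intro continuous_intros cont j s0)
      then have "((\<lambda>t. g j t - \<epsilon> * t) \<longlongrightarrow> g j s - \<epsilon> * s) (at s within {0..})"
        by (simp add: continuous_within)
      moreover have "g j s - \<epsilon> * s > K" using neg by simp
      ultimately have "eventually (\<lambda>t. g j t - \<epsilon> * t > K) (at s within {0..})"
        by (rule order_tendstoD(1))
      then obtain d where d: "d > 0" and dP: "\<And>t. t \<in> {0..} \<Longrightarrow> t \<noteq> s \<Longrightarrow> dist t s < d \<Longrightarrow> g j t - \<epsilon> * t > K"
        unfolding eventually_at by blast
      show False
      proof (cases "s - d/2 \<ge> 0")
        case True
        have "g j (s - d/2) - \<epsilon> * (s - d/2) > K" using True d by (intro dP) (auto simp: dist_real_def)
        moreover have "g j (s - d/2) \<le> K + \<epsilon> * (s - d/2)" using True d j by (intro before) auto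
        ultimately show False by simp
      next
        case False
        show False
        proof (cases "s = 0")
          case True then show False using neg init[OF j] by simp
        next
          case False
        then have "s \<noteq> 0" "dist 0 s < d" using s0 d \<open>\<not> 0 \<le> s - d/2\<close> by (auto simp: dist_real_def)
        then have "g j 0 - \<epsilon> * 0 > K" using dP[of 0] by auto
        with init[OF j] show False by simp
        qed
      qed
    qed
    have ev: "eventually (\<lambda>t. g j t \<le> K + \<epsilon> * t) (at_right s)" if j: "j \<in> I" for j
    proof (cases "g j s < K + \<epsilon> * s")
      case True
      have "continuous (at s within {0..}) (\<lambda>t. g j t - \<epsilon> * t)"
        by (intro continuous_intros cont j s0)
      then have "((\<lambda>t. g j t - \<epsilon> * t) \<longlongrightarrow> g j s - \<epsilon> * s) (at s within {0..})"
        by (simp add: continuous_within)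
      then have "((\<lambda>t. g j t - \<epsilon> * t) \<longlongrightarrow> g j s - \<epsilon> * s) (at_right s)"
        by (rule tendsto_within_subset) (use s0 in auto)
      moreover have "g j s - \<epsilon> * s < K" using True by simp
      ultimately have "eventually (\<lambda>t. g j t - \<epsilon> * t < K) (at_right s)"
        by (rule order_tendstoD(2))
      then show ?thesis by eventually_elim simp
    next
      case False
      then have eq: "g j s = K + \<epsilon> * s" using at_s[OF j] by simp
      have "g' j s \<le> 0"
      proof (rule cond[OF j s0])
        show "\<forall>l\<in>I. g l s \<le> g j s" using at_s eq by simp
        show "g j s < K + \<eta>" using eq ep sT
          by (smt (verit, best) mult_left_mono)
      qed
      have "(g j has_real_derivative g' j s) (at s within {s<..})"
        using deriv[OF j s0] by (rule DERIV_subset) (use s0 in auto)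
      then have "((\<lambda>y. (g j y - g j s) / (y - s)) \<longlongrightarrow> g' j s) (at_right s)"
        by (simp add: has_field_derivative_iff)
      then have "eventually (\<lambda>y. (g j y - g j s) / (y - s) < \<epsilon>) (at_right s)"
        by (rule order_tendstoD(2)) (use \<open>g' j s \<le> 0\<close> ep in simp)
      moreover have "eventually (\<lambda>y. y > s) (at_right s)"
        by (simp add: eventually_at_right_field) (meson less_add_one)
      ultimately show ?thesis
      proof eventually_elim
        case (elim y)
        then have "g j y - g j s < \<epsilon> * (y - s)" by (simp add: pos_divide_less_eq)
        then show ?case using eq by (simp add: algebra_simps)
      qed
    qed
    have "eventually (\<lambda>t. \<forall>j\<in>I. g j t \<le> K + \<epsilon> * t) (at_right s)"
      using fin ev by (intro eventually_ball_finite) auto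
    then obtain b where b: "b > s" and bP: "\<And>y. y > s \<Longrightarrow> y < b \<Longrightarrow> \<forall>j\<in>I. g j y \<le> K + \<epsilon> * y"
      unfolding eventually_at_right_field by blast
    have "b \<le> s" unfolding s_def
    proof (rule cInf_greatest[OF Sne])
      fix u assume u: "u \<in> S"
      then obtain j where j: "j \<in> I" "g j u > K + \<epsilon> * u" and u0: "0 \<le> u" by (auto simp: S_def)
      have "\<not> u < s" using before[OF j(1) u0] j(2) by (meson not_le)
      moreover have "u \<noteq> s" using at_s[OF j(1)] j(2) by auto
      ultimately have "u > s" by simp
      then show "b \<le> u" using bP[of u] j by (meson not_le)
    qed
    with b show False by simp
  qed
  show ?thesis
  proof (rule ccontr)
    assume "\<not> ?thesis"
    then have gap: "g i t0 - K > 0" by simp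
    define m where "m = min (\<eta> / 2) ((g i t0 - K) / 2)"
    have m0: "m > 0" "m \<le> \<eta> / 2" "m \<le> (g i t0 - K) / 2" unfolding m_def using eta gap by (auto simp: min_def)
    define \<epsilon> where "\<epsilon> = m / (t0 + 1)"
    have ep: "\<epsilon> > 0" unfolding \<epsilon>_def using m0 t0 by simp
    have em: "\<epsilon> * (t0 + 1) = m" unfolding \<epsilon>_def using t0 by simp
    have e1: "\<epsilon> * t0 < \<eta>" using em m0 ep eta by (simp add: algebra_simps)
    have e2: "\<epsilon> * t0 < g i t0 - K" using em m0 ep gap by (simp add: algebra_simps)
    have "g i t0 \<le> K + \<epsilon> * t0" using claim[OF t0 ep e1] iI t0 by auto
    with e2 show False by simp
  qed
qed

lemma onb_expand:
  fixes e :: "'d \<Rightarrow> real^'d"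
  assumes on: "\<And>k l. e k \<bullet> e l = (if k = l then 1 else 0)"
  shows "(\<Sum>k\<in>UNIV. (x \<bullet> e k) *\<^sub>R e k) = x"
proof -
  have inj: "inj e" by (rule injI) (metis on zero_neq_one)
  have po: "pairwise orthogonal (range e)"
    by (auto simp: pairwise_def orthogonal_def on)
  have n0: "0 \<notin> range e" using on by (metis imageE inner_zero_left zero_neq_one)
  have ind: "independent (range e)" by (rule pairwise_orthogonal_independent[OF po n0])
  have card: "card (range e) = DIM(real^'d)" using inj by (simp add: card_image)
  have "UNIV \<subseteq> span (range e)"
    by (rule card_ge_dim_independent[OF _ ind]) (simp_all add: card dim_UNIV)
  then have "(\<Sum>i\<in>range e. (x \<bullet> i) *\<^sub>R i) = x"
    by (intro orthonormal_basis_expand[OF po]) (auto simp: norm_eq_sqrt_inner on)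
  then show ?thesis using inj by (simp add: sum.reindex)
qed

lemma onb_inner:
  fixes e :: "'d \<Rightarrow> real^'d"
  assumes on: "\<And>k l. e k \<bullet> e l = (if k = l then 1 else 0)"
  shows "x \<bullet> y = (\<Sum>k\<in>UNIV. (x \<bullet> e k) * (y \<bullet> e k))"
proof -
  have "x \<bullet> y = x \<bullet> (\<Sum>k\<in>UNIV. (y \<bullet> e k) *\<^sub>R e k)" using onb_expand[OF on] by simp
  also have "\<dots> = (\<Sum>k\<in>UNIV. (x \<bullet> e k) * (y \<bullet> e k))"
    by (simp add: inner_sum_right mult.commute)
  finally show ?thesis .
qed

lemma onb_quad:
  fixes e :: "'d \<Rightarrow> real^'d" and V :: "real^'d^'d"
  assumes on: "\<And>k l. e k \<bullet> e l = (if k = l then 1 else 0)"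
    and eig: "\<And>k. V *v e k = lam k *\<^sub>R e k"
  shows "x \<bullet> (V *v y) = (\<Sum>k\<in>UNIV. lam k * (x \<bullet> e k) * (y \<bullet> e k))"
proof -
  have "V *v y = V *v (\<Sum>k\<in>UNIV. (y \<bullet> e k) *\<^sub>R e k)" using onb_expand[OF on] by simp
  also have "\<dots> = (\<Sum>k\<in>UNIV. (y \<bullet> e k) *\<^sub>R (V *v e k))"
    by (simp add: linear_sum[OF matrix_vector_mul_linear] matrix_vector_mult_scaleR)
  finally have "V *v y = (\<Sum>k\<in>UNIV. (y \<bullet> e k) *\<^sub>R (lam k *\<^sub>R e k))" by (simp add: eig)
  then show ?thesis by (simp add: inner_sum_right algebra_simps)
qed

lemma onb_Ve:
  fixes e :: "'d \<Rightarrow> real^'d" and V :: "real^'d^'d"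
  assumes on: "\<And>k l. e k \<bullet> e l = (if k = l then 1 else 0)"
    and eig: "\<And>k. V *v e k = lam k *\<^sub>R e k"
  shows "(V *v y) \<bullet> e k = lam k * (y \<bullet> e k)"
proof -
  have "(V *v y) \<bullet> e k = e k \<bullet> (V *v y)" by (simp add: inner_commute)
  also have "\<dots> = (\<Sum>l\<in>UNIV. lam l * (e k \<bullet> e l) * (y \<bullet> e l))" by (rule onb_quad[OF on eig])
  also have "\<dots> = (\<Sum>l\<in>UNIV. if l = k then lam l * (y \<bullet> e l) else 0)"
    by (rule sum.cong) (auto simp: on)
  also have "\<dots> = lam k * (y \<bullet> e k)" by simp
  finally show ?thesis .
qed

lemma field_coord:
  fixes e :: "'d \<Rightarrow> real^'d" and V :: "real^'d^'d"
  assumes on: "\<And>k l. e k \<bullet> e l = (if k = l then 1 else 0)"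
    and eig: "\<And>k. V *v e k = lam k *\<^sub>R e k"
  shows "attn_field \<beta> V n y i \<bullet> e k =
     lam k * (\<Sum>j<n. exp (\<beta> * (y i \<bullet> (V *v y j))) / attnZ \<beta> V n y i * (y j \<bullet> e k))
     - (\<Sum>j<n. exp (\<beta> * (y i \<bullet> (V *v y j))) / attnZ \<beta> V n y i * (y i \<bullet> (V *v y j))) * (y i \<bullet> e k)"
proof -
  define Z where "Z = attnZ \<beta> V n y i"
  define w where "w j = exp (\<beta> * (y i \<bullet> (V *v y j)))" for j
  have "attn_field \<beta> V n y i \<bullet> e k =
     (1/Z) * (\<Sum>j<n. w j * ((V *v y j) \<bullet> e k))
     - ((1/Z) * (\<Sum>j<n. w j * (y i \<bullet> (V *v y j)))) * (y i \<bullet> e k)"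
    unfolding attn_field_def tproj_def Z_def w_def
    by (simp add: inner_diff_left inner_sum_left inner_sum_right)
  also have "\<dots> = lam k * (\<Sum>j<n. w j / Z * (y j \<bullet> e k))
     - (\<Sum>j<n. w j / Z * (y i \<bullet> (V *v y j))) * (y i \<bullet> e k)"
    by (simp add: onb_Ve[OF on eig] sum_distrib_left sum_divide_distrib algebra_simps)
  finally show ?thesis unfolding Z_def w_def .
qed

lemma exp_decay:
  fixes m K :: real
  assumes m: "m > 0"
  shows "((\<lambda>t. K * exp (- m * t)) \<longlongrightarrow> 0) at_top"
proof -
  have "filterlim (\<lambda>t. m * t) at_top at_top"
    by (rule filterlim_tendsto_pos_mult_at_top[OF tendsto_const m filterlim_ident])
  then have "filterlim (\<lambda>t. - (m * t)) at_bot at_top" by (simp add: filterlim_uminus_at_bot)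
  then have "((\<lambda>t. exp (- (m * t))) \<longlongrightarrow> 0) at_top" by (rule filterlim_compose[OF exp_at_bot])
  then show ?thesis by (intro tendsto_mult_right_zero) simp
qed

theorem theorem6p1:
  fixes \<beta> \<delta> :: real and V :: "real^'d^'d"
    and e :: "'d \<Rightarrow> real^'d" and lam :: "'d \<Rightarrow> real" and k1 :: 'd
    and n :: nat and x :: "nat \<Rightarrow> real \<Rightarrow> real^'d"
  assumes beta_pos: "\<beta> > 0"
    and V_sym: "transpose V = V"
    and e_orthonormal: "\<And>k l. e k \<bullet> e l = (if k = l then 1 else 0)"
    and e_eigen: "\<And>k. V *v e k = lam k *\<^sub>R e k"
    and gap: "\<And>k. k \<noteq> k1 \<Longrightarrow> lam k1 > \<bar>lam k\<bar>"
    and n_pos: "n > 0"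
    and on_sphere: "\<And>i t. i < n \<Longrightarrow> t \<ge> 0 \<Longrightarrow> norm (x i t) = 1"
    and ode: "\<And>i t. i < n \<Longrightarrow> t \<ge> 0 \<Longrightarrow>
               (x i has_vector_derivative attn_field \<beta> V n (\<lambda>j. x j t) i) (at t within {0..})"
    and delta_pos: "\<delta> > 0"
    and init: "\<And>i. i < n \<Longrightarrow> x i 0 \<bullet> e k1 \<ge> \<delta>"
  shows "(\<forall>t\<ge>0. \<forall>i<n. x i t \<bullet> e k1 \<ge> \<delta>)
     \<and> (\<forall>k. k \<noteq> k1 \<longrightarrow> (\<forall>t\<ge>0.
           (MAX i\<in>{..<n}. \<bar>(x i t \<bullet> e k) / (x i t \<bullet> e k1)\<bar>)
             \<le> (MAX i\<in>{..<n}. \<bar>(x i 0 \<bullet> e k) / (x i 0 \<bullet> e k1)\<bar>)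
                * exp (- \<delta> * (lam k1 - \<bar>lam k\<bar>) * t)))
     \<and> (\<forall>i<n. (x i \<longlongrightarrow> e k1) at_top)"
proof -
  note on = e_orthonormal and eig = e_eigen
  define c where "c i k t = x i t \<bullet> e k" for i k t
  define a where "a i j t = exp (\<beta> * (x i t \<bullet> (V *v x j t))) / attnZ \<beta> V n (\<lambda>j. x j t) i" for i j t
  define q where "q i j t = x i t \<bullet> (V *v x j t)" for i j t
  define \<sigma> where "\<sigma> i t = (\<Sum>j<n. a i j t * q i j t)" for i t
  define D where "D i k t = lam k * (\<Sum>j<n. a i j t * c j k t) - \<sigma> i t * c i k t" for i k t
  have deriv: "((\<lambda>s. c i k s) has_real_derivative D i k t) (at t within {0..})"
    if "i < n" "t \<ge> 0" for i k t
  proof -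
    have "((\<lambda>s. x i s \<bullet> e k) has_vector_derivative (attn_field \<beta> V n (\<lambda>j. x j t) i \<bullet> e k)) (at t within {0..})"
      by (rule bounded_linear.has_vector_derivative[OF bounded_linear_inner_left ode[OF that]])
    then show ?thesis
      unfolding has_real_derivative_iff_has_vector_derivative[symmetric] field_coord[OF on eig]
      by (simp add: c_def D_def \<sigma>_def a_def q_def)
  qed
  have Zpos: "attnZ \<beta> V n (\<lambda>j. x j t) i > 0" for i t
    unfolding attnZ_def using n_pos by (intro sum_pos) auto
  have apos: "a i j t > 0" for i j t unfolding a_def using Zpos by simp
  have asum: "(\<Sum>j<n. a i j t) = 1" for i t
    unfolding a_def sum_divide_distrib[symmetric] using Zpos[of t i] by (simp add: attnZ_def)
  have sq1: "(\<Sum>k\<in>UNIV. (c i k t)\<^sup>2) = 1" if "i < n" "t \<ge> 0" for i t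
  proof -
    have "x i t \<bullet> x i t = 1" using on_sphere[OF that] by (simp add: power2_norm_eq_inner[symmetric])
    then show ?thesis using onb_inner[OF on, of "x i t" "x i t"] by (simp add: c_def power2_eq_square)
  qed
  have enorm: "norm (e k) = 1" for k by (simp add: norm_eq_sqrt_inner on)
  have cle1: "\<bar>c i k t\<bar> \<le> 1" if "i < n" "t \<ge> 0" for i k t
    using Cauchy_Schwarz_ineq2[of "x i t" "e k"] on_sphere[OF that] enorm by (simp add: c_def)
  have qexp: "q i j t = (\<Sum>l\<in>UNIV. lam l * c i l t * c j l t)" for i j t
    unfolding q_def c_def by (rule onb_quad[OF on eig])
  have qle: "q i j t \<le> lam k1" if "i < n" "j < n" "t \<ge> 0" and L: "\<And>l. \<bar>lam l\<bar> \<le> lam k1" for i j t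
  proof -
    have "q i j t \<le> (\<Sum>l\<in>UNIV. lam k1 * ((c i l t)\<^sup>2 + (c j l t)\<^sup>2) / 2)"
      unfolding qexp
    proof (rule sum_mono)
      fix l
      have ab: "\<bar>c i l t * c j l t\<bar> \<le> ((c i l t)\<^sup>2 + (c j l t)\<^sup>2) / 2"
      proof -
        have "0 \<le> (\<bar>c i l t\<bar> - \<bar>c j l t\<bar>)\<^sup>2" by simp
        then have "0 \<le> (c i l t)\<^sup>2 + (c j l t)\<^sup>2 - 2 * \<bar>c i l t * c j l t\<bar>"
          by (simp add: power2_diff abs_mult)
        then show ?thesis by simp
      qed
      have "lam l * c i l t * c j l t \<le> \<bar>lam l\<bar> * \<bar>c i l t * c j l t\<bar>"
        by (metis abs_ge_self abs_mult mult.assoc)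
      also have "\<dots> \<le> lam k1 * (((c i l t)\<^sup>2 + (c j l t)\<^sup>2) / 2)"
        using L[of k1] by (intro mult_mono L ab) auto
      finally show "lam l * c i l t * c j l t \<le> lam k1 * ((c i l t)\<^sup>2 + (c j l t)\<^sup>2) / 2" by simp
    qed
    also have "\<dots> = lam k1 / 2 * ((\<Sum>l\<in>UNIV. (c i l t)\<^sup>2) + (\<Sum>l\<in>UNIV. (c j l t)\<^sup>2))"
      by (simp add: sum_distrib_left sum.distrib sum_divide_distrib[symmetric] add_divide_distrib distrib_left)
    also have "\<dots> = lam k1" using sq1 that by simp
    finally show ?thesis .
  qed
  have Lk1: "\<bar>lam l\<bar> \<le> lam k1" if "k \<noteq> k1" for k l
    using gap[OF that] gap[of l] by (cases "l = k1") auto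
  have part1: "c i k1 t \<ge> \<delta>" if it: "i < n" "t \<ge> 0" for i t
  proof -
    have "(\<lambda>s. - c i k1 s) t \<le> - \<delta>"
    proof (rule core_cmp[where I="{..<n}" and g="\<lambda>i s. - c i k1 s" and g'="\<lambda>i s. - D i k1 s" and \<eta>=\<delta>])
      show "finite {..<n}" by simp
      show "((\<lambda>s. - c i k1 s) has_real_derivative - D i k1 t) (at t within {0..})"
        if "i \<in> {..<n}" "0 \<le> t" for i t using deriv that by (intro DERIV_minus) auto
      show "0 < \<delta>" by (rule delta_pos)
      show "- c i k1 0 \<le> - \<delta>" if "i \<in> {..<n}" for i using init that by (simp add: c_def)
      show "i \<in> {..<n}" "0 \<le> t" using it by auto
    next
      fix i t assume i: "i \<in> {..<n}" and t: "0 \<le> t"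
        and am: "\<forall>j\<in>{..<n}. - c j k1 t \<le> - c i k1 t" and pos: "- c i k1 t < - \<delta> + \<delta>"
      have ci: "c i k1 t > 0" using pos by simp
      have S: "c i k1 t \<le> (\<Sum>j<n. a i j t * c j k1 t)"
      proof -
        have "c i k1 t = (\<Sum>j<n. a i j t * c i k1 t)" using asum by (simp add: sum_distrib_right[symmetric])
        also have "\<dots> \<le> (\<Sum>j<n. a i j t * c j k1 t)"
          using am apos by (intro sum_mono mult_left_mono) (auto simp: less_imp_le)
        finally show ?thesis .
      qed
      show "- D i k1 t \<le> 0"
      proof (cases "\<exists>k. k \<noteq> k1")
        case True
        then obtain k where k: "k \<noteq> k1" by blast
        have l0: "lam k1 \<ge> 0" using Lk1[OF k, of k] by simp
        have "\<sigma> i t \<le> (\<Sum>j<n. a i j t * lam k1)"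
          unfolding \<sigma>_def using apos i t Lk1[OF k]
          by (intro sum_mono mult_left_mono qle) (auto simp: less_imp_le)
        also have "\<dots> = lam k1" using asum by (simp add: sum_distrib_right[symmetric])
        finally have "\<sigma> i t * c i k1 t \<le> lam k1 * c i k1 t" using ci by (simp add: mult_right_mono)
        also have "\<dots> \<le> lam k1 * (\<Sum>j<n. a i j t * c j k1 t)" using S l0 by (rule mult_left_mono)
        finally show ?thesis unfolding D_def by simp
      next
        case False
        then have U: "UNIV = {k1}" by auto
        have c2: "(c i k1 t)\<^sup>2 = 1" using sq1[of i t] i t by (simp add: U)
        have "\<sigma> i t * c i k1 t = (\<Sum>j<n. a i j t * (lam k1 * c i k1 t * c j k1 t)) * c i k1 t"
          unfolding \<sigma>_def qexp by (simp add: U)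
        also have "\<dots> = lam k1 * (\<Sum>j<n. a i j t * c j k1 t) * (c i k1 t)\<^sup>2"
          by (simp add: sum_distrib_left sum_distrib_right power2_eq_square algebra_simps)
        finally show ?thesis unfolding D_def using c2 by simp
      qed
    qed
    then show ?thesis by simp
  qed
  have cpos: "c i k1 t > 0" if "i < n" "t \<ge> 0" for i t using part1[OF that] delta_pos by simp
  define KK where "KK k = (MAX i\<in>{..<n}. \<bar>c i k 0 / c i k1 0\<bar>)" for k
  have part2: "\<bar>c i k t / c i k1 t\<bar> \<le> KK k * exp (- \<delta> * (lam k1 - \<bar>lam k\<bar>) * t)"
    if k: "k \<noteq> k1" and it: "i < n" "t \<ge> 0" for k i t
  proof -
    define \<mu> where "\<mu> = \<delta> * (lam k1 - \<bar>lam k\<bar>)"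
    have mu0: "\<mu> > 0" unfolding \<mu>_def using gap[OF k] delta_pos by simp
    define sg where "sg b = (if b then 1 else -1 :: real)" for b
    define r where "r j s = c j k s / c j k1 s" for j s
    define dr where "dr j s = (D j k s * c j k1 s - c j k s * D j k1 s) / (c j k1 s * c j k1 s)" for j s
    define g where "g p s = exp (\<mu> * s) * (sg (snd p) * r (fst p) s)" for p s
    define g' where "g' p s = exp (\<mu> * s) * \<mu> * (sg (snd p) * r (fst p) s)
        + exp (\<mu> * s) * (sg (snd p) * dr (fst p) s)" for p s
    have main: "g (i, b) t \<le> KK k" for b
    proof (rule core_cmp[where I="{..<n} \<times> UNIV" and g=g and g'=g' and \<eta>=1])
      show "finite ({..<n} \<times> (UNIV :: bool set))" by simp
      show "(i, b) \<in> {..<n} \<times> UNIV" "0 \<le> t" using it by auto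
      show "(0::real) < 1" by simp
    next
      fix p and s :: real assume p: "p \<in> {..<n} \<times> (UNIV :: bool set)" and s: "0 \<le> s"
      obtain j b where pj: "p = (j, b)" and j: "j < n" using p by auto
      have d1: "((\<lambda>s. r j s) has_real_derivative dr j s) (at s within {0..})"
        unfolding r_def dr_def by (rule DERIV_divide[OF deriv[OF j s] deriv[OF j s]]) (use cpos[OF j s] in simp)
      have dexp: "((\<lambda>s. exp (\<mu> * s)) has_real_derivative exp (\<mu> * s) * \<mu>) (at s within {0..})"
        by (auto intro!: derivative_eq_intros)
      show "(g p has_real_derivative g' p s) (at s within {0..})"
        unfolding g_def g'_def pj fst_conv snd_conv
        using DERIV_mult[OF dexp DERIV_cmult[OF d1, of "sg b"]] by (simp add: mult.commute)
    next
      fix p assume p: "p \<in> {..<n} \<times> (UNIV :: bool set)"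
      obtain j b where pj: "p = (j, b)" and j: "j < n" using p by auto
      have "sg b * r j 0 \<le> \<bar>r j 0\<bar>" unfolding sg_def by auto
      also have "\<dots> \<le> KK k" unfolding KK_def r_def using j by (intro Max_ge) auto
      finally show "g p 0 \<le> KK k" unfolding g_def pj by simp
    next
      fix p and s :: real assume p: "p \<in> {..<n} \<times> (UNIV :: bool set)" and s: "0 \<le> s"
        and am: "\<forall>q\<in>{..<n} \<times> UNIV. g q s \<le> g p s"
      obtain j b where pj: "p = (j, b)" and j: "j < n" using p by auto
      define E where "E = exp (\<mu> * s)"
      have E0: "E > 0" unfolding E_def by simp
      define \<rho> where "\<rho> = sg b * r j s"
      have rl: "\<bar>r l s\<bar> \<le> \<rho>" if l: "l < n" for l
      proof -
        have "E * (sg True * r l s) \<le> E * \<rho>" "E * (sg False * r l s) \<le> E * \<rho>"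
          using am l unfolding g_def pj \<rho>_def E_def by auto
        then have "E * r l s \<le> E * \<rho>" "E * (- r l s) \<le> E * \<rho>" unfolding sg_def by simp_all
        then have "r l s \<le> \<rho>" "- r l s \<le> \<rho>" using E0 by (simp_all only: mult_le_cancel_left_pos)
        then show ?thesis by simp
      qed
      have rho0: "\<rho> \<ge> 0" using rl[OF j] by simp
      define c1 where "c1 = c j k1 s"
      have c1: "c1 > 0" "c1 \<le> 1" unfolding c1_def using cpos[OF j s] cle1[OF j s, of k1] by auto
      define A where "A = (\<Sum>l<n. a j l s * c l k s)"
      define B where "B = (\<Sum>l<n. a j l s * c l k1 s)"
      have N: "D j k s * c1 - c j k s * D j k1 s = lam k * A * c1 - lam k1 * c j k s * B"
        unfolding D_def A_def B_def c1_def by (simp add: algebra_simps)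
      have sgabs: "\<bar>sg b\<bar> = 1" unfolding sg_def by simp
      have eq1: "sg b * dr j s = sg b * lam k / c1 * A - lam k1 * \<rho> / c1 * B"
        unfolding dr_def \<rho>_def r_def c1_def[symmetric] N using c1 by (simp add: field_simps)
      have eq2: "(\<Sum>l<n. a j l s * (c l k1 s / c1) * (lam k * sg b * r l s - lam k1 * \<rho>))
          = sg b * lam k / c1 * A - lam k1 * \<rho> / c1 * B"
      proof -
        have "(\<Sum>l<n. a j l s * (c l k1 s / c1) * (lam k * sg b * r l s - lam k1 * \<rho>))
            = (\<Sum>l<n. sg b * lam k / c1 * (a j l s * c l k s) - lam k1 * \<rho> / c1 * (a j l s * c l k1 s))"
        proof (rule sum.cong[OF refl])
          fix l assume "l \<in> {..<n}"
          then have "c l k1 s > 0" using cpos s by auto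
          then show "a j l s * (c l k1 s / c1) * (lam k * sg b * r l s - lam k1 * \<rho>)
            = sg b * lam k / c1 * (a j l s * c l k s) - lam k1 * \<rho> / c1 * (a j l s * c l k1 s)"
            unfolding r_def using c1 by (simp add: field_simps)
        qed
        also have "\<dots> = sg b * lam k / c1 * A - lam k1 * \<rho> / c1 * B"
          unfolding A_def B_def by (simp add: sum_subtractf sum_distrib_left)
        finally show ?thesis .
      qed
      have Bd: "B \<ge> \<delta>"
      proof -
        have "\<delta> = (\<Sum>l<n. a j l s * \<delta>)" using asum by (simp add: sum_distrib_right[symmetric])
        also have "\<dots> \<le> B" unfolding B_def using part1 apos s
          by (intro sum_mono mult_left_mono) (auto simp: less_imp_le)
        finally show ?thesis .
      qed
      have "sg b * dr j s \<le> (\<Sum>l<n. a j l s * (c l k1 s / c1) * ((\<bar>lam k\<bar> - lam k1) * \<rho>))"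
        unfolding eq1 eq2[symmetric]
      proof (rule sum_mono)
        fix l assume l: "l \<in> {..<n}"
        have "lam k * sg b * r l s \<le> \<bar>lam k\<bar> * \<bar>r l s\<bar>"
          by (metis abs_ge_self abs_mult mult.assoc mult.commute sgabs mult_1)
        also have "\<dots> \<le> \<bar>lam k\<bar> * \<rho>" using rl l by (intro mult_left_mono) auto
        finally have "lam k * sg b * r l s - lam k1 * \<rho> \<le> (\<bar>lam k\<bar> - lam k1) * \<rho>"
          by (simp add: algebra_simps)
        moreover have "a j l s * (c l k1 s / c1) \<ge> 0" using apos[of j l s] cpos[of l s] l s c1
          by (simp add: less_imp_le)
        ultimately show "a j l s * (c l k1 s / c1) * (lam k * sg b * r l s - lam k1 * \<rho>)
            \<le> a j l s * (c l k1 s / c1) * ((\<bar>lam k\<bar> - lam k1) * \<rho>)"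
          by (rule mult_left_mono)
      qed
      also have "\<dots> = (\<bar>lam k\<bar> - lam k1) * \<rho> * (B / c1)"
        unfolding B_def by (simp add: sum_distrib_left sum_distrib_right sum_divide_distrib algebra_simps)
      also have "\<dots> \<le> (\<bar>lam k\<bar> - lam k1) * \<rho> * \<delta>"
      proof (rule mult_left_mono_neg)
        have "B \<le> B / c1" using c1 Bd delta_pos by (simp add: le_divide_eq mult_left_le)
        then show "\<delta> \<le> B / c1" using Bd by simp
        show "(\<bar>lam k\<bar> - lam k1) * \<rho> \<le> 0" using gap[OF k] rho0 by (simp add: mult_nonpos_nonneg)
      qed
      finally have "\<mu> * \<rho> + sg b * dr j s \<le> 0" unfolding \<mu>_def by (simp add: algebra_simps)
      then have "E * (\<mu> * \<rho> + sg b * dr j s) \<le> 0" using E0 by (simp add: mult_nonpos_nonneg mult_le_0_iff)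
      then show "g' p s \<le> 0" unfolding g'_def pj fst_conv snd_conv E_def \<rho>_def by (simp add: algebra_simps)
    qed
    have "exp (\<mu> * t) * \<bar>r i t\<bar> \<le> KK k"
      using main[of "r i t \<ge> 0"] unfolding g_def sg_def by (cases "r i t \<ge> 0") auto
    then have "\<bar>r i t\<bar> \<le> KK k / exp (\<mu> * t)" by (simp add: field_simps)
    also have "\<dots> = KK k * exp (- \<delta> * (lam k1 - \<bar>lam k\<bar>) * t)"
    proof -
      have "- \<delta> * (lam k1 - \<bar>lam k\<bar>) * t = - (\<mu> * t)" unfolding \<mu>_def by simp
      then show ?thesis by (simp only: exp_minus divide_inverse)
    qed
    finally show ?thesis unfolding r_def .
  qed
  have part3: "(x i \<longlongrightarrow> e k1) at_top" if i: "i < n" for i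
  proof -
    have ck0: "((\<lambda>t. c i k t) \<longlongrightarrow> 0) at_top" if k: "k \<noteq> k1" for k
    proof (rule Lim_null_comparison)
      show "((\<lambda>t. KK k * exp (- (\<delta> * (lam k1 - \<bar>lam k\<bar>)) * t)) \<longlongrightarrow> 0) at_top"
        by (rule exp_decay) (use gap[OF k] delta_pos in simp)
      show "\<forall>\<^sub>F t in at_top. norm (c i k t) \<le> KK k * exp (- (\<delta> * (lam k1 - \<bar>lam k\<bar>)) * t)"
        using eventually_ge_at_top[of "0::real"]
      proof eventually_elim
        case (elim t)
        have c1: "c i k1 t > 0" "c i k1 t \<le> 1" using cpos[OF i elim] cle1[OF i elim, of k1] by auto
        have "\<bar>c i k t\<bar> = \<bar>c i k t / c i k1 t\<bar> * c i k1 t" using c1 by (simp add: abs_divide)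
        also have "\<dots> \<le> \<bar>c i k t / c i k1 t\<bar>" using c1 by (intro mult_left_le) auto
        also have "\<dots> \<le> KK k * exp (- \<delta> * (lam k1 - \<bar>lam k\<bar>) * t)" by (rule part2[OF k i elim])
        finally show ?case by simp
      qed
    qed
    define S where "S t = (\<Sum>k\<in>UNIV - {k1}. (c i k t)\<^sup>2)" for t
    have S0: "(S \<longlongrightarrow> 0) at_top" unfolding S_def
      by (intro tendsto_null_sum) (use tendsto_power[OF ck0, of _ 2] in auto)
    have "((\<lambda>t. x i t - e k1) \<longlongrightarrow> 0) at_top"
    proof (rule Lim_null_comparison)
      show "((\<lambda>t. sqrt (2 * S t)) \<longlongrightarrow> 0) at_top"
        using tendsto_real_sqrt[OF tendsto_mult[OF tendsto_const[of 2] S0]] by simp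
      show "\<forall>\<^sub>F t in at_top. norm (x i t - e k1) \<le> sqrt (2 * S t)"
        using eventually_ge_at_top[of "0::real"]
      proof eventually_elim
        case (elim t)
        have c1: "c i k1 t > 0" "c i k1 t \<le> 1" using cpos[OF i elim] cle1[OF i elim, of k1] by auto
        have xx: "x i t \<bullet> x i t = 1" using on_sphere[OF i elim] by (simp add: power2_norm_eq_inner[symmetric])
        have "(norm (x i t - e k1))\<^sup>2 = 2 - 2 * c i k1 t"
          unfolding power2_norm_eq_inner c_def using xx on[of k1 k1]
          by (simp add: inner_diff_left inner_diff_right inner_commute)
        also have "1 = (c i k1 t)\<^sup>2 + S t"
          using sq1[OF i elim] unfolding S_def by (simp add: sum.remove[of UNIV k1])
        then have "2 - 2 * c i k1 t \<le> 2 * S t"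
          using c1 by (simp add: power2_eq_square) (smt (verit) mult_left_le)
        finally show ?case by (rule real_le_rsqrt)
      qed
    qed
    then show ?thesis by (simp add: Lim_null[symmetric])
  qed
  show ?thesis
  proof (intro conjI allI impI)
    show "\<delta> \<le> x i t \<bullet> e k1" if "0 \<le> t" "i < n" for t :: real and i using part1 that by (simp add: c_def)
    show "(x i \<longlongrightarrow> e k1) at_top" if "i < n" for i using part3 that .
    fix k and t :: real assume k: "k \<noteq> k1" and t: "0 \<le> t"
    show "(MAX i\<in>{..<n}. \<bar>(x i t \<bullet> e k) / (x i t \<bullet> e k1)\<bar>)
             \<le> (MAX i\<in>{..<n}. \<bar>(x i 0 \<bullet> e k) / (x i 0 \<bullet> e k1)\<bar>)
                * exp (- \<delta> * (lam k1 - \<bar>lam k\<bar>) * t)"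
      using part2[OF k _ t] n_pos unfolding KK_def c_def by (intro Max.boundedI) auto
  qed
qed
end
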